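(* Let $f=\frac1n\sum_{i=1}^nf_i$ with $x^*$ a minimizer, $\mathbf W\succ0$, and $\mathcal D$ a distribution of sketch matrices such that there is $\mathcal L_2>0$ with $\mathbb{E}_{\mathcal D}\|(\mathbf G(x)-\mathbf G(x^* ))\Pi_{\mathbf S}\|_{\mathbf W^{-1}}^2\le2\mathcal L_2(f(x)-f(x^* ))$ for all $x$. Then the iterates of JacSketch satisfy $$\mathbb{E}_{\mathcal D}\|\mathbf J^{k+1}-\mathbf G(x^* )\|_{\mathbf W^{-1}}^2\le(1-\kappa)\|\mathbf J^k-\mathbf G(x^* )\|_{\mathbf W^{-1}}^2+2\mathcal L_2(f(x^k)-f(x^* )),$$ where the expectation is over $\mathbf S_k\sim\mathcal D$ conditional on $x^k,\mathbf J^k$.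
   Context: $\mathbf G(x)=[\nabla f_1(x),\dots,\nabla f_n(x)]\in\mathbb{R}^{d\times n}$; $\|\mathbf X\|_{\mathbf W^{-1}}^2=\mathrm{Tr}(\mathbf X\mathbf W^{-1}\mathbf X^\top)$; $\Pi_{\mathbf S}=\mathbf S(\mathbf S^\top\mathbf W\mathbf S)^\dagger\mathbf S^\top\mathbf W$; $\kappa=\lambda_{\min}(\mathbb{E}_{\mathcal D}[\Pi_{\mathbf S}])$. JacSketch: sample $\mathbf S_k\sim\mathcal D$ independently, $\mathbf J^{k+1}=\mathbf J^k+(\mathbf G(x^k)-\mathbf J^k)\Pi_{\mathbf S_k}$, $g^k=\frac1n\mathbf J^ke+\frac{\theta_{\mathbf S_k}}n(\mathbf G(x^k)-\mathbf J^k)\Pi_{\mathbf S_k}e$, $x^{k+1}=x^k-\alpha g^k$ ($e$ all-ones, $\theta_{\mathbf S}$ a random variable depending on $\mathbf S$). *)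

theory Defs
  imports "HOL-Analysis.Analysis" "HOL-Probability.Probability"
begin

definition pinv :: "real^'m^'m \<Rightarrow> real^'m^'m" where
  "pinv A = (THE B. A ** B ** A = A \<and> B ** A ** B = B \<and>
                     transpose (A ** B) = A ** B \<and> transpose (B ** A) = B ** A)"

definition normWinv2 :: "real^'n^'n \<Rightarrow> real^'n^'d \<Rightarrow> real" where
  "normWinv2 W X = trace (X ** matrix_inv W ** transpose X)"

definition sketch_proj :: "real^'n^'n \<Rightarrow> real^'t^'n \<Rightarrow> real^'n^'n" where
  "sketch_proj W S = S ** pinv (transpose S ** W ** S) ** transpose S ** W"

definition real_eigenvalues :: "real^'n^'n \<Rightarrow> real set" where
  "real_eigenvalues A = {c. \<exists>v. v \<noteq> 0 \<and> A *v v = c *\<^sub>R v}"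

definition lambda_min :: "real^'n^'n \<Rightarrow> real" where
  "lambda_min A = Inf (real_eigenvalues A)"

text \<open>Jacobian G(x): column i is the gradient of f_i at x.\<close>
definition jac :: "('n \<Rightarrow> real^'d \<Rightarrow> real^'d) \<Rightarrow> real^'d \<Rightarrow> real^'n^'d" where
  "jac gradf x = (\<chi> a i. gradf i x $ a)"

definition jac_update :: "real^'n^'n \<Rightarrow> real^'n^'d \<Rightarrow> real^'n^'d \<Rightarrow> real^'t^'n \<Rightarrow> real^'n^'d" where
  "jac_update W Gx J S = J + (Gx - J) ** sketch_proj W S"

end

theory Submission
  imports Defs
begin


lemma mm_add_rdistrib: "((A::real^'n^'m) + B) ** C = A ** C + B ** C"
  by (vector matrix_matrix_mult_def sum.distrib[symmetric] field_simps)
lemma mm_sub_rdistrib: "((A::real^'n^'m) - B) ** C = A ** C - B ** C"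
  by (vector matrix_matrix_mult_def sum_subtractf[symmetric] field_simps)
lemma mm_sub_ldistrib: "(A::real^'n^'m) ** (B - C) = A ** B - A ** C"
  by (vector matrix_matrix_mult_def sum_subtractf[symmetric] field_simps)
lemma tr_add: "transpose ((A::real^'n^'m) + B) = transpose A + transpose B"
  by (vector transpose_def)
lemma tr_sub: "transpose ((A::real^'n^'m) - B) = transpose A - transpose B"
  by (vector transpose_def)
lemma mm_scaleR_left: "(c *\<^sub>R (A::real^'n^'m)) ** B = c *\<^sub>R (A ** B)"
  by (vector matrix_matrix_mult_def sum_distrib_left field_simps)
lemma mm_scaleR_right: "(A::real^'n^'m) ** (c *\<^sub>R B) = c *\<^sub>R (A ** B)"
  by (vector matrix_matrix_mult_def sum_distrib_left field_simps)
lemma mv_scaleR: "(A::real^'n^'m) *v (c *\<^sub>R x) = c *\<^sub>R (A *v x)"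
  by (vector matrix_vector_mult_def sum_distrib_left field_simps)
lemma mv_sub_matrix: "((A::real^'n^'m) - B) *v x = A *v x - B *v x"
  by (vector matrix_vector_mult_def sum_subtractf[symmetric] field_simps)
lemma dot_transpose: "(x::real^'m) \<bullet> ((A::real^'n^'m) *v y) = (transpose A *v x) \<bullet> y"
  by (metis dot_lmul_matrix transpose_matrix_vector)

definition penrose :: "real^'m^'m \<Rightarrow> real^'m^'m \<Rightarrow> bool" where
  "penrose A B \<longleftrightarrow> A ** B ** A = A \<and> B ** A ** B = B \<and>
                     transpose (A ** B) = A ** B \<and> transpose (B ** A) = B ** A"

lemma penrose_unique:
  assumes "penrose A B" "penrose A C" shows "B = C"
proof -
  have b1: "A ** B ** A = A" "B ** A ** B = B" "transpose (A ** B) = A ** B" "transpose (B ** A) = B ** A"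
    using assms(1) unfolding penrose_def by auto
  have c1: "A ** C ** A = A" "C ** A ** C = C" "transpose (A ** C) = A ** C" "transpose (C ** A) = C ** A"
    using assms(2) unfolding penrose_def by auto
  have "B = B ** (A ** B)" using b1 by (simp add: matrix_mul_assoc)
  also have "\<dots> = B ** transpose (A ** B)" using b1 by simp
  also have "\<dots> = B ** transpose B ** transpose A" by (simp add: matrix_transpose_mul matrix_mul_assoc)
  also have "\<dots> = B ** transpose B ** transpose (A ** C ** A)" using c1 by simp
  also have "\<dots> = B ** (transpose B ** transpose A) ** (transpose C ** transpose A)"
    by (simp add: matrix_transpose_mul matrix_mul_assoc)
  also have "\<dots> = B ** transpose (A ** B) ** transpose (A ** C)"
    by (simp add: matrix_transpose_mul matrix_mul_assoc)
  also have "\<dots> = (B ** A ** B) ** A ** C" using b1 c1 by (simp add: matrix_mul_assoc)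
  also have "\<dots> = B ** A ** C" using b1 by simp
  finally have 1: "B = B ** A ** C" .
  have "C = (C ** A) ** C" using c1 by (simp add: matrix_mul_assoc)
  also have "\<dots> = transpose (C ** A) ** C" using c1 by simp
  also have "\<dots> = transpose (A ** B ** A) ** transpose C ** C" using b1 by (simp add: matrix_transpose_mul matrix_mul_assoc)
  also have "\<dots> = (transpose A ** transpose B) ** (transpose A ** transpose C) ** C"
    by (simp add: matrix_transpose_mul matrix_mul_assoc)
  also have "\<dots> = transpose (B ** A) ** transpose (C ** A) ** C"
    by (simp add: matrix_transpose_mul matrix_mul_assoc)
  also have "\<dots> = B ** A ** (C ** A ** C)" using b1 c1 by (metis matrix_mul_assoc)
  also have "\<dots> = B ** A ** C" using c1 by simp
  finally show ?thesis using 1 by simp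
qed

lemma penrose_pinv: assumes "penrose A B" shows "penrose A (pinv A)"
proof -
  have "\<exists>!B. penrose A B" using assms penrose_unique by blast
  hence "penrose A (THE B. penrose A B)" by (rule theI')
  thus ?thesis unfolding pinv_def penrose_def[symmetric] .
qed

lemma penrose_transpose:
  assumes "penrose A B" "transpose A = A" shows "penrose A (transpose B)"
  using assms unfolding penrose_def
  by (metis matrix_transpose_mul matrix_mul_assoc)

lemma sym_penrose_exists:
  fixes M :: "real^'m^'m"
  assumes Ms: "transpose M = M"
  shows "\<exists>B. penrose M B"
proof -
  define V where "V = {x::real^'m. M *v x = 0}"
  have subV: "subspace V" unfolding V_def subspace_def
    by (simp add: matrix_vector_right_distrib mv_scaleR)
  obtain T where T: "0 \<notin> T" "T \<subseteq> V" "pairwise orthogonal T" "independent T" "span T = V"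
    using orthogonal_basis_subspace[OF subV] by metis
  have finT: "finite T" using T(4) independent_imp_finite by blast
  define p where "p x = (\<Sum>b\<in>T. (b \<bullet> x / (b \<bullet> b)) *\<^sub>R b)" for x :: "real^'m"
  define P :: "real^'m^'m" where "P = (\<chi> i j. \<Sum>b\<in>T. b$i * b$j / (b \<bullet> b))"
  have Pp: "P *v x = p x" for x
  proof -
    have "(P *v x) $ i = p x $ i" for i
    proof -
      have "(P *v x) $ i = (\<Sum>j\<in>UNIV. \<Sum>b\<in>T. b$i * b$j / (b \<bullet> b) * x$j)"
        unfolding P_def by (simp add: matrix_vector_mult_def sum_distrib_right)
      also have "\<dots> = (\<Sum>b\<in>T. \<Sum>j\<in>UNIV. b$i * b$j / (b \<bullet> b) * x$j)" by (rule sum.swap)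
      also have "\<dots> = (\<Sum>b\<in>T. (b \<bullet> x / (b \<bullet> b)) * b$i)"
      proof (intro sum.cong refl)
        fix b assume "b \<in> T"
        have "(\<Sum>j\<in>UNIV. b$i * b$j / (b \<bullet> b) * x$j) = (\<Sum>j\<in>UNIV. (b$i / (b \<bullet> b)) * (b$j * x$j))"
          by (intro sum.cong refl) simp
        also have "\<dots> = (b$i / (b \<bullet> b)) * (b \<bullet> x)" by (simp add: inner_vec_def sum_distrib_left)
        finally show "(\<Sum>j\<in>UNIV. b$i * b$j / (b \<bullet> b) * x$j) = (b \<bullet> x / (b \<bullet> b)) * b$i" by simp
      qed
      also have "\<dots> = p x $ i" unfolding p_def by (simp add: sum_component)
      finally show ?thesis .
    qed
    thus ?thesis by (simp add: vec_eq_iff)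
  qed
  have pV: "p x \<in> V" for x
    proof -
    have "p x \<in> span T" unfolding p_def by (rule span_sum, rule span_scale, erule span_base)
    thus ?thesis using T(5) by simp
  qed
  have porth: "w \<bullet> (x - p x) = 0" if "w \<in> V" for w x
    using Gram_Schmidt_step[OF T(3), of w x] that T(5) unfolding p_def orthogonal_def by simp
  have pfix: "p x = x" if "x \<in> V" for x
  proof -
    have "x - p x \<in> V" using that pV subV by (simp add: subspace_diff)
    hence "(x - p x) \<bullet> (x - p x) = 0" using porth by blast
    thus ?thesis by simp
  qed
  have Psym: "transpose P = P" unfolding P_def transpose_def by (simp add: vec_eq_iff mult.commute)
  have MP: "M ** P = 0"
    by (simp add: matrix_eq matrix_vector_mul_assoc[symmetric] Pp) (use pV V_def in auto)
  have PM: "P ** M = 0"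
    by (metis MP Ms Psym matrix_transpose_mul transpose_iff transpose_mat mat_0)
  have PP: "P ** P = P"
    by (simp add: matrix_eq matrix_vector_mul_assoc[symmetric] Pp pfix pV)
  have inj: "(M + P) *v x = 0 \<Longrightarrow> x = 0" for x
  proof -
    assume h: "(M + P) *v x = 0"
    have Mx: "M *v x = - (P *v x)" using h by (simp add: matrix_vector_mult_add_rdistrib eq_neg_iff_add_eq_0)
    have "(P *v x) \<bullet> (M *v x) = (M *v (P *v x)) \<bullet> x"
      using dot_transpose[of "P *v x" M x] Ms by simp
    also have "\<dots> = 0" using pV[of x] Pp V_def by simp
    finally have "P *v x = 0" using Mx by simp
    hence "M *v x = 0" using Mx by simp
    hence "p x = x" using pfix V_def by simp
    thus "x = 0" using \<open>P *v x = 0\<close> Pp by simp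
  qed
  obtain C where C1: "C ** (M + P) = mat 1"
    using matrix_left_invertible_ker[of "M + P"] inj by blast
  hence C2: "(M + P) ** C = mat 1" using matrix_left_right_inverse by blast
  have CP: "C ** P = P"
  proof -
    have "(M + P) ** P = P" using MP PP by (simp add: mm_add_rdistrib)
    hence "C ** ((M + P) ** P) = C ** P" by simp
    thus ?thesis using C1 by (simp add: matrix_mul_assoc)
  qed
  have PC: "P ** C = P"
  proof -
    have "P ** (M + P) = P" using PM PP by (simp add: matrix_add_ldistrib)
    hence "(P ** (M + P)) ** C = P ** C" by simp
    thus ?thesis using C2 by (simp add: matrix_mul_assoc[symmetric])
  qed
  define B where "B = C - P"
  have MB: "M ** B = mat 1 - P"
  proof -
    have "M ** C + P ** C = mat 1" using C2 by (simp add: mm_add_rdistrib)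
    thus ?thesis unfolding B_def using MP PC by (simp add: mm_sub_ldistrib algebra_simps)
  qed
  have BM: "B ** M = mat 1 - P"
  proof -
    have "C ** M + C ** P = mat 1" using C1 by (simp add: matrix_add_ldistrib)
    thus ?thesis unfolding B_def using PM CP by (simp add: mm_sub_rdistrib algebra_simps)
  qed
  have "penrose M B" unfolding penrose_def
  proof (intro conjI)
    show "M ** B ** M = M" using MB PM by (simp add: mm_sub_rdistrib)
    show "B ** M ** B = B" using BM unfolding B_def using PC PP
      by (simp add: mm_sub_rdistrib mm_sub_ldistrib)
    show "transpose (M ** B) = M ** B" using MB Psym by (simp add: tr_sub)
    show "transpose (B ** M) = B ** M" using BM Psym by (simp add: tr_sub)
  qed
  thus ?thesis by blast
qed

lemma pinv_sym:
  fixes M :: "real^'m^'m"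
  assumes "transpose M = M"
  shows "penrose M (pinv M)" "transpose (pinv M) = pinv M"
proof -
  obtain B where "penrose M B" using sym_penrose_exists[OF assms] by blast
  thus 1: "penrose M (pinv M)" by (rule penrose_pinv)
  show "transpose (pinv M) = pinv M"
    using penrose_unique[OF penrose_transpose[OF 1 assms] 1] .
qed



lemma W_inv_facts:
  fixes W :: "real^'n^'n"
  assumes W_sym: "transpose W = W" and W_pd: "\<And>v. v \<noteq> 0 \<Longrightarrow> v \<bullet> (W *v v) > 0"
  shows "W ** matrix_inv W = mat 1" "matrix_inv W ** W = mat 1"
    "transpose (matrix_inv W) = matrix_inv W"
    "\<And>v. v \<noteq> 0 \<Longrightarrow> v \<bullet> (matrix_inv W *v v) > 0"
proof -
  have "\<forall>x. W *v x = 0 \<longrightarrow> x = 0" using W_pd by (metis inner_zero_right less_irrefl)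
  then obtain C where C: "C ** W = mat 1" using matrix_left_invertible_ker by blast
  hence "W ** C = mat 1 \<and> C ** W = mat 1" using matrix_left_right_inverse by blast
  hence ex: "\<exists>C. W ** C = mat 1 \<and> C ** W = mat 1" by blast
  have inv: "W ** matrix_inv W = mat 1 \<and> matrix_inv W ** W = mat 1"
    unfolding matrix_inv_def by (rule someI_ex[OF ex])
  thus 1: "W ** matrix_inv W = mat 1" and 2: "matrix_inv W ** W = mat 1" by auto
  have "transpose (matrix_inv W) ** W = mat 1"
    using 1 W_sym by (metis matrix_transpose_mul transpose_mat)
  hence "transpose (matrix_inv W) = transpose (matrix_inv W) ** (W ** matrix_inv W)" using 1 by simp
  also have "\<dots> = matrix_inv W" using \<open>transpose (matrix_inv W) ** W = mat 1\<close>
    by (simp add: matrix_mul_assoc)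
  finally show "transpose (matrix_inv W) = matrix_inv W" .
  fix v :: "real^'n" assume "v \<noteq> 0"
  define u where "u = matrix_inv W *v v"
  have Wu: "W *v u = v" unfolding u_def using 1 by (simp add: matrix_vector_mul_assoc)
  hence "u \<noteq> 0" using \<open>v \<noteq> 0\<close> by auto
  hence "u \<bullet> (W *v u) > 0" by (rule W_pd)
  thus "v \<bullet> (matrix_inv W *v v) > 0" using Wu unfolding u_def by (simp add: inner_commute)
qed

lemma sketch_facts:
  fixes W :: "real^'n^'n" and S :: "real^'t^'n"
  assumes W_sym: "transpose W = W" and WWi: "W ** Wi = mat 1"
  defines "Pj \<equiv> sketch_proj W S"
  shows "transpose (Pj ** Wi) = Pj ** Wi" "Pj ** Wi ** transpose Pj = Pj ** Wi"
proof -
  define M where "M = transpose S ** W ** S"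
  have Ms: "transpose M = M" unfolding M_def using W_sym by (simp add: matrix_transpose_mul matrix_mul_assoc)
  define Bm where "Bm = pinv M"
  have pen: "M ** Bm ** M = M" "Bm ** M ** Bm = Bm" and Bs: "transpose Bm = Bm"
    using pinv_sym[OF Ms] unfolding Bm_def penrose_def by auto
  have Pj: "Pj = S ** Bm ** transpose S ** W" by (simp add: Pj_def sketch_proj_def Bm_def M_def)
  have K: "Pj ** Wi = S ** Bm ** transpose S" unfolding Pj using WWi by (simp add: matrix_mul_assoc[symmetric])
  have Pt: "transpose Pj = W ** S ** Bm ** transpose S" unfolding Pj using W_sym Bs
    by (simp add: matrix_transpose_mul matrix_mul_assoc)
  show "transpose (Pj ** Wi) = Pj ** Wi" unfolding K using Bs by (simp add: matrix_transpose_mul matrix_mul_assoc)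
  have "Pj ** Wi ** transpose Pj = S ** (Bm ** M ** Bm) ** transpose S"
    unfolding K Pt M_def by (simp add: matrix_mul_assoc)
  also have "\<dots> = Pj ** Wi" using pen K by simp
  finally show "Pj ** Wi ** transpose Pj = Pj ** Wi" .
qed

lemma expand_quad:
  fixes X1 X2 :: "real^'n^'d" and Wi :: "real^'n^'n"
  shows "(X1 + X2) ** Wi ** transpose (X1 + X2) =
     X1 ** Wi ** transpose X1 + X1 ** Wi ** transpose X2 + X2 ** Wi ** transpose X1 + X2 ** Wi ** transpose X2"
  by (simp add: tr_add matrix_add_ldistrib mm_add_rdistrib)

lemma quad_mul:
  fixes A :: "real^'n^'d" and C :: "real^'n^'d" and U V Wi :: "real^'n^'n"
  shows "(A ** U) ** Wi ** transpose (C ** V) = A ** (U ** Wi ** transpose V) ** transpose C"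
  by (simp add: matrix_transpose_mul matrix_mul_assoc)

lemma main_identity:
  fixes A B :: "real^'n^'d" and Wi Pj K :: "real^'n^'n"
  assumes Wis: "transpose Wi = Wi" and Ks: "transpose K = K" and PK: "Pj ** Wi = K"
    and PKP: "Pj ** Wi ** transpose Pj = K"
  shows "trace ((A + (B - A) ** Pj) ** Wi ** transpose (A + (B - A) ** Pj)) =
     trace (A ** Wi ** transpose A) - trace (A ** K ** transpose A) + trace ((B ** Pj) ** Wi ** transpose (B ** Pj))"
proof -
  have WPt: "Wi ** transpose Pj = K" using PK Wis Ks by (metis matrix_transpose_mul)
  have e1: "(mat 1 - Pj) ** Wi ** transpose (mat 1 - Pj) = Wi - K"
    using PK PKP WPt by (simp add: tr_sub mm_sub_rdistrib mm_sub_ldistrib)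
  have e2: "(mat 1 - Pj) ** Wi ** transpose Pj = 0"
    using PK PKP WPt by (simp add: tr_sub mm_sub_rdistrib mm_sub_ldistrib)
  have e3: "Pj ** Wi ** transpose (mat 1 - Pj) = 0"
    using PK PKP WPt by (simp add: tr_sub mm_sub_rdistrib mm_sub_ldistrib matrix_mul_assoc[symmetric])
  have X: "A + (B - A) ** Pj = A ** (mat 1 - Pj) + B ** Pj"
    by (simp add: mm_sub_rdistrib mm_sub_ldistrib)
  have "(A + (B - A) ** Pj) ** Wi ** transpose (A + (B - A) ** Pj) =
     A ** (Wi - K) ** transpose A + (B ** Pj) ** Wi ** transpose (B ** Pj)"
    unfolding X expand_quad quad_mul e1 e2 e3 by simp
  thus ?thesis by (simp add: mm_sub_rdistrib mm_sub_ldistrib trace_add trace_sub)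
qed

lemma trace_quad:
  fixes X :: "real^'n^'d" and Q :: "real^'n^'n"
  shows "trace (X ** Q ** transpose X) = (\<Sum>i\<in>UNIV. X$i \<bullet> (Q *v X$i))"
  apply (simp add: trace_def matrix_matrix_mult_def transpose_def inner_vec_def matrix_vector_mult_def
      sum_distrib_left sum_distrib_right ac_simps)
  apply (rule sum.cong[OF refl])
  apply (subst sum.swap)
  apply (simp add: ac_simps)
  done

lemma trace_quad_mono:
  fixes X :: "real^'n^'d" and Q R :: "real^'n^'n"
  assumes "\<And>v. c * (v \<bullet> (R *v v)) \<le> v \<bullet> (Q *v v)"
  shows "c * trace (X ** R ** transpose X) \<le> trace (X ** Q ** transpose X)"
  unfolding trace_quad sum_distrib_left by (rule sum_mono) (rule assms)

lemma trace_quad_nonneg: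
  fixes X :: "real^'n^'d" and Q :: "real^'n^'n"
  assumes "\<And>v. 0 \<le> v \<bullet> (Q *v v)"
  shows "0 \<le> trace (X ** Q ** transpose X)"
  unfolding trace_quad by (rule sum_nonneg) (rule assms)



lemma real_aux: fixes q c :: real
  assumes "q \<ge> 0" "\<And>s. s > 0 \<Longrightarrow> 0 \<le> s^2 * c - 2 * s * q" shows "q = 0"
proof (rule ccontr)
  assume "q \<noteq> 0" hence qp: "q > 0" using assms(1) by simp
  define s where "s = q / (\<bar>c\<bar> + 1)"
  have sp: "s > 0" unfolding s_def using qp by simp
  have "s * \<bar>c\<bar> < q" unfolding s_def using qp
    by (simp add: field_simps)
  hence "s * c < 2 * q" using qp by (smt (verit) abs_ge_self mult_left_mono sp)
  hence "s * (s * c) < s * (2 * q)" using sp by simp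
  hence "s^2 * c - 2 * s * q < 0" by (simp add: power2_eq_square algebra_simps)
  thus False using assms(2)[OF sp] by simp
qed

lemma mv_scaleR_matrix: "(c *\<^sub>R (A::real^'n^'m)) *v x = c *\<^sub>R (A *v x)"
  by (vector matrix_vector_mult_def sum_distrib_left field_simps)

lemma quad_scale: "(c *\<^sub>R a) \<bullet> ((Q::real^'n^'n) *v (c *\<^sub>R a)) = c^2 * (a \<bullet> (Q *v a))"
  by (simp add: mv_scaleR power2_eq_square)

lemma rayleigh:
  fixes Q R :: "real^'n^'n"
  assumes Qs: "transpose Q = Q" and Rs: "transpose R = R"
    and Rpd: "\<And>v. v \<noteq> 0 \<Longrightarrow> v \<bullet> (R *v v) > 0"
  shows "\<exists>\<mu> v. v \<noteq> 0 \<and> Q *v v = \<mu> *\<^sub>R (R *v v) \<and> (\<forall>a. \<mu> * (a \<bullet> (R *v a)) \<le> a \<bullet> (Q *v a))"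
proof -
  define \<phi> where "\<phi> a = (a \<bullet> (Q *v a)) / (a \<bullet> (R *v a))" for a :: "real^'n"
  have ne: "sphere (0::real^'n) 1 \<noteq> {}" by simp
  have cont: "continuous_on (sphere 0 1) \<phi>" unfolding \<phi>_def
    apply (intro continuous_intros linear_continuous_on[OF matrix_vector_mul_bounded_linear])
    using Rpd by (metis less_irrefl mem_sphere_0 norm_zero zero_neq_one)
  obtain v where v: "v \<in> sphere 0 1" and vmin: "\<And>y. y \<in> sphere 0 1 \<Longrightarrow> \<phi> v \<le> \<phi> y"
    using continuous_attains_inf[OF compact_sphere ne cont] by blast
  define \<mu> where "\<mu> = \<phi> v"
  have v0: "v \<noteq> 0" using v by auto
  have bound: "\<mu> * (a \<bullet> (R *v a)) \<le> a \<bullet> (Q *v a)" for a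
  proof (cases "a = 0")
    case True thus ?thesis by simp
  next
    case False
    define w where "w = (1 / norm a) *\<^sub>R a"
    have w: "w \<in> sphere 0 1" using False unfolding w_def by simp
    hence w0: "w \<noteq> 0" by auto
    have "\<mu> \<le> \<phi> w" unfolding \<mu>_def using vmin[OF w] .
    hence "\<mu> * (w \<bullet> (R *v w)) \<le> w \<bullet> (Q *v w)" unfolding \<phi>_def using Rpd[OF w0]
      by (simp add: pos_le_divide_eq)
    hence "norm a ^ 2 * (\<mu> * (w \<bullet> (R *v w))) \<le> norm a ^ 2 * (w \<bullet> (Q *v w))"
      by (simp add: mult_left_mono)
    moreover have "a = norm a *\<^sub>R w" unfolding w_def using False by simp
    ultimately show ?thesis by (metis quad_scale mult.left_commute)
  qed
  define Rm where "Rm = Q - \<mu> *\<^sub>R R"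
  have Rms: "transpose Rm = Rm" unfolding Rm_def using Qs Rs by (simp add: tr_sub transpose_scalar)
  have Rmv: "a \<bullet> (Rm *v a) = a \<bullet> (Q *v a) - \<mu> * (a \<bullet> (R *v a))" for a
    unfolding Rm_def by (simp add: mv_sub_matrix mv_scaleR_matrix inner_diff_right)
  have Rmpsd: "0 \<le> a \<bullet> (Rm *v a)" for a using bound[of a] Rmv[of a] by simp
  have "v \<bullet> (Rm *v v) = 0" using Rmv[of v] Rpd[OF v0] unfolding \<mu>_def \<phi>_def by simp
  define w where "w = Rm *v v"
  have sym: "v \<bullet> (Rm *v w) = w \<bullet> w" using dot_transpose[of v Rm w] Rms unfolding w_def by (simp add: inner_commute)
  have "w \<bullet> w = 0"
  proof (rule real_aux)
    show "0 \<le> w \<bullet> w" by simp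
    fix s :: real assume "s > 0"
    have "0 \<le> (v - s *\<^sub>R w) \<bullet> (Rm *v (v - s *\<^sub>R w))" by (rule Rmpsd)
    also have "\<dots> = v \<bullet> (Rm *v v) - s * (v \<bullet> (Rm *v w)) - s * (w \<bullet> (Rm *v v)) + s^2 * (w \<bullet> (Rm *v w))"
      by (simp add: matrix_vector_mult_diff_distrib mv_scaleR inner_diff_left inner_diff_right power2_eq_square algebra_simps)
    also have "\<dots> = s^2 * (w \<bullet> (Rm *v w)) - 2 * s * (w \<bullet> w)"
      using sym \<open>v \<bullet> (Rm *v v) = 0\<close> unfolding w_def by simp
    finally show "0 \<le> s^2 * (w \<bullet> (Rm *v w)) - 2 * s * (w \<bullet> w)" .
  qed
  hence "w = 0" by simp
  hence "Q *v v = \<mu> *\<^sub>R (R *v v)" unfolding w_def Rm_def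
    by (simp add: mv_sub_matrix mv_scaleR_matrix)
  thus ?thesis using v0 bound by blast
qed



lemma trace_scaleR: "trace (c *\<^sub>R (A::real^'n^'n)) = c * trace A"
  by (simp add: trace_def sum_distrib_left)

lemma g_bl:
  fixes X :: "real^'n^'d" and Wi :: "real^'n^'n"
  shows "bounded_linear (\<lambda>P::real^'n^'n. trace (X ** P ** Wi ** transpose X))"
proof -
  have "linear (\<lambda>P::real^'n^'n. trace (X ** P ** Wi ** transpose X))"
    by (rule linearI) (simp_all add: matrix_add_ldistrib mm_add_rdistrib trace_add mm_scaleR_left mm_scaleR_right trace_scaleR)
  thus ?thesis by (simp add: linear_conv_bounded_linear)
qed

lemma rmul_bl: "bounded_linear (\<lambda>P::real^'n^'n. P ** (Wi::real^'n^'n))"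
proof -
  have "linear (\<lambda>P::real^'n^'n. P ** Wi)"
    by (rule linearI) (simp_all add: mm_add_rdistrib mm_scaleR_left)
  thus ?thesis by (simp add: linear_conv_bounded_linear)
qed

lemma tr_bl: "bounded_linear (\<lambda>P::real^'n^'n. transpose P)"
proof -
  have "linear (\<lambda>P::real^'n^'n. transpose P)"
    by (rule linearI) (simp_all add: tr_add transpose_scalar)
  thus ?thesis by (simp add: linear_conv_bounded_linear)
qed

lemma psd_congr:
  fixes Wi X :: "real^'n^'n"
  assumes "\<And>v. v \<noteq> 0 \<Longrightarrow> v \<bullet> (Wi *v v) > 0"
  shows "0 \<le> v \<bullet> ((X ** Wi ** transpose X) *v v)"
proof -
  have "v \<bullet> ((X ** Wi ** transpose X) *v v) = (transpose X *v v) \<bullet> (Wi *v (transpose X *v v))"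
    by (simp add: dot_transpose matrix_vector_mul_assoc[symmetric])
  also have "\<dots> \<ge> 0" using assms[of "transpose X *v v"] by (cases "transpose X *v v = 0") auto
  finally show ?thesis .
qed

theorem lemma3p9:
  fixes fi :: "'n::finite \<Rightarrow> real^'d \<Rightarrow> real"
    and gradf :: "'n \<Rightarrow> real^'d \<Rightarrow> real^'d"
    and f :: "real^'d \<Rightarrow> real"
    and xstar :: "real^'d"
    and W :: "real^'n^'n"
    and D :: "(real^'t^'n) measure"
    and L2 :: real
    and x :: "real^'d"
    and J :: "real^'n^'d"
  assumes grad: "\<And>i y. (fi i has_derivative (\<lambda>h. gradf i y \<bullet> h)) (at y)"
    and f_def: "\<And>y. f y = (1 / real CARD('n)) * (\<Sum>i\<in>UNIV. fi i y)"
    and xstar_min: "\<And>y. f xstar \<le> f y"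
    and W_sym: "transpose W = W"
    and W_pd: "\<And>v. v \<noteq> 0 \<Longrightarrow> v \<bullet> (W *v v) > 0"
    and D_prob: "prob_space D"
    and Pi_meas: "(\<lambda>S. sketch_proj W S) \<in> borel_measurable D"
    and L2_pos: "L2 > 0"
    and L2_bound: "\<And>y. (\<integral>S. normWinv2 W ((jac gradf y - jac gradf xstar) ** sketch_proj W S) \<partial>D)
                        \<le> 2 * L2 * (f y - f xstar)"
  shows "(\<integral>S. normWinv2 W (jac_update W (jac gradf x) J S - jac gradf xstar) \<partial>D)
           \<le> (1 - lambda_min (\<integral>S. sketch_proj W S \<partial>D)) * normWinv2 W (J - jac gradf xstar)
             + 2 * L2 * (f x - f xstar)"
proof -
  interpret P: prob_space D by (rule D_prob)
  define Wi where "Wi = matrix_inv W"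
  define Gs where "Gs = jac gradf xstar"
  define Gx where "Gx = jac gradf x"
  define A where "A = J - Gs"
  define Bx where "Bx = Gx - Gs"
  define Pj where "Pj (S::real^'t^'n) = sketch_proj W S" for S
  define K where "K (S::real^'t^'n) = Pj S ** Wi" for S
  define g where "g X P = trace (X ** P ** Wi ** transpose X)" for X :: "real^'n^'d" and P
  define c where "c = normWinv2 W A"
  have WWi: "W ** Wi = mat 1" and WiW: "Wi ** W = mat 1" and Wis: "transpose Wi = Wi"
    and Wipd: "\<And>v. v \<noteq> 0 \<Longrightarrow> v \<bullet> (Wi *v v) > 0"
    using W_inv_facts[OF W_sym W_pd] unfolding Wi_def by auto
  have Ks: "transpose (K S) = K S" and PKP: "Pj S ** Wi ** transpose (Pj S) = K S" for S
    using sketch_facts[OF W_sym WWi, of S] unfolding K_def Pj_def by auto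
  have Kpsd: "0 \<le> v \<bullet> (K S *v v)" for S v
    using psd_congr[OF Wipd, of v "Pj S"] PKP[of S] by simp
  have e1: "(mat 1 - Pj S) ** Wi ** transpose (mat 1 - Pj S) = Wi - K S" for S
  proof -
    have WPt: "Wi ** transpose (Pj S) = K S" using Ks[of S] Wis unfolding K_def by (metis matrix_transpose_mul)
    show ?thesis using PKP[of S] WPt unfolding K_def by (simp add: tr_sub mm_sub_rdistrib mm_sub_ldistrib)
  qed
  have WKpsd: "0 \<le> v \<bullet> ((Wi - K S) *v v)" for S v
    using psd_congr[OF Wipd, of v "mat 1 - Pj S"] e1[of S] by simp
  have gK: "g X (Pj S) = trace (X ** K S ** transpose X)" for X S
    unfolding g_def K_def by (simp add: matrix_mul_assoc)
  have g_nonneg: "0 \<le> g X (Pj S)" for X S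
    unfolding gK by (rule trace_quad_nonneg) (rule Kpsd)
  have g_le: "g X (Pj S) \<le> normWinv2 W X" for X S
  proof -
    have "0 \<le> trace (X ** (Wi - K S) ** transpose X)"
      by (rule trace_quad_nonneg) (rule WKpsd)
    thus ?thesis unfolding gK normWinv2_def Wi_def[symmetric]
      by (simp add: mm_sub_ldistrib mm_sub_rdistrib trace_sub)
  qed
  have uB: "normWinv2 W (Bx ** Pj S) = g Bx (Pj S)" for S
    unfolding gK normWinv2_def Wi_def[symmetric] quad_mul PKP ..
  have ident: "normWinv2 W (jac_update W Gx J S - Gs) = c - g A (Pj S) + g Bx (Pj S)" for S
  proof -
    have "jac_update W Gx J S - Gs = A + (Bx - A) ** Pj S"
      unfolding jac_update_def A_def Bx_def Pj_def by (simp add: algebra_simps)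
    thus ?thesis
      using main_identity[OF Wis Ks K_def[symmetric] PKP, of A Bx]
      unfolding c_def normWinv2_def Wi_def[symmetric] gK uB[unfolded normWinv2_def Wi_def[symmetric]]
      by simp
  qed
  have meas: "(\<lambda>S. g X (Pj S)) \<in> borel_measurable D" for X
    unfolding g_def Pj_def
    by (rule borel_measurable_continuous_on[OF linear_continuous_on[OF g_bl] Pi_meas])
  have intg: "integrable D (\<lambda>S. g X (Pj S))" for X
    by (rule P.integrable_const_bound[where B="normWinv2 W X"])
       (use g_nonneg g_le meas in auto)
  have LHS: "(\<integral>S. normWinv2 W (jac_update W Gx J S - Gs) \<partial>D) =
       c - (\<integral>S. g A (Pj S) \<partial>D) + (\<integral>S. g Bx (Pj S) \<partial>D)"
  proof -
    have "(\<integral>S. normWinv2 W (jac_update W Gx J S - Gs) \<partial>D) = (\<integral>S. c - g A (Pj S) + g Bx (Pj S) \<partial>D)"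
      using ident by simp
    also have "\<dots> = c - (\<integral>S. g A (Pj S) \<partial>D) + (\<integral>S. g Bx (Pj S) \<partial>D)"
      using intg by (simp add: P.prob_space)
    finally show ?thesis .
  qed
  have Lb: "(\<integral>S. g Bx (Pj S) \<partial>D) \<le> 2 * L2 * (f x - f xstar)"
    using L2_bound[of x] uB unfolding Bx_def Gx_def Gs_def Pj_def by simp
  show ?thesis
  proof (cases "integrable D Pj")
    case False
    hence E0: "(\<integral>S. sketch_proj W S \<partial>D) = 0" using not_integrable_integral_eq unfolding Pj_def by blast
    have "real_eigenvalues (0::real^'n^'n) = {0}"
    proof -
      obtain i :: 'n where True by blast
      have "axis i (1::real) \<noteq> 0" by simp
      thus ?thesis unfolding real_eigenvalues_def by auto
    qed
    hence lm: "lambda_min (\<integral>S. sketch_proj W S \<partial>D) = 0" unfolding E0 lambda_min_def by simp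
    have "0 \<le> (\<integral>S. g A (Pj S) \<partial>D)" using g_nonneg by simp
    thus ?thesis using LHS Lb lm unfolding c_def A_def Gx_def Gs_def by simp
  next
    case True
    define EP where "EP = (\<integral>S. Pj S \<partial>D)"
    define Q where "Q = EP ** Wi"
    have gA: "(\<integral>S. g A (Pj S) \<partial>D) = trace (A ** Q ** transpose A)"
      unfolding g_def Q_def EP_def
      using integral_bounded_linear[OF g_bl True, of A Wi] by (simp add: matrix_mul_assoc)
    have QK: "Q = (\<integral>S. K S \<partial>D)"
      unfolding Q_def EP_def K_def using integral_bounded_linear[OF rmul_bl True, of Wi] by simp
    have intK: "integrable D K" unfolding K_def using integrable_bounded_linear[OF rmul_bl True] .
    have Qs: "transpose Q = Q"
    proof -
      have "transpose Q = (\<integral>S. transpose (K S) \<partial>D)"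
        unfolding QK using integral_bounded_linear[OF tr_bl intK] by simp
      also have "\<dots> = Q" unfolding QK using Ks by simp
      finally show ?thesis .
    qed
    obtain \<mu> v where v0: "v \<noteq> 0" and Qv: "Q *v v = \<mu> *\<^sub>R (Wi *v v)"
      and bnd: "\<And>a. \<mu> * (a \<bullet> (Wi *v a)) \<le> a \<bullet> (Q *v a)"
      using rayleigh[OF Qs Wis Wipd] by blast
    have lm: "lambda_min EP = \<mu>"
    proof -
      have mem: "\<mu> \<in> real_eigenvalues EP"
      proof -
        define u where "u = Wi *v v"
        have "W *v u = v" unfolding u_def using WWi by (simp add: matrix_vector_mul_assoc)
        hence "u \<noteq> 0" using v0 by auto
        moreover have "EP *v u = \<mu> *\<^sub>R u" unfolding u_def using Qv unfolding Q_def
          by (simp add: matrix_vector_mul_assoc)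
        ultimately show ?thesis unfolding real_eigenvalues_def by blast
      qed
      have low: "\<mu> \<le> e" if "e \<in> real_eigenvalues EP" for e
      proof -
        from that obtain u where u0: "u \<noteq> 0" and Eu: "EP *v u = e *\<^sub>R u"
          unfolding real_eigenvalues_def by auto
        define a where "a = W *v u"
        have Qa: "Q *v a = e *\<^sub>R u" unfolding a_def Q_def
        proof -
          have "(EP ** Wi) *v (W *v u) = EP *v ((Wi ** W) *v u)"
            by (metis matrix_vector_mul_assoc)
          also have "\<dots> = e *\<^sub>R u" using Eu WiW by simp
          finally show "(EP ** Wi) *v (W *v u) = e *\<^sub>R u" .
        qed
        have Wia: "Wi *v a = u" unfolding a_def using WiW by (simp add: matrix_vector_mul_assoc)
        have s: "u \<bullet> (W *v u) > 0" using W_pd[OF u0] .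
        have "\<mu> * (u \<bullet> (W *v u)) \<le> e * (u \<bullet> (W *v u))"
        proof -
          have "\<mu> * (a \<bullet> (Wi *v a)) \<le> a \<bullet> (Q *v a)" by (rule bnd)
          hence "\<mu> * (a \<bullet> u) \<le> e * (a \<bullet> u)" by (simp only: Qa Wia inner_scaleR_right)
          moreover have "a \<bullet> u = u \<bullet> (W *v u)" unfolding a_def by (simp add: inner_commute)
          ultimately show ?thesis by simp
        qed
        thus ?thesis using s by simp
      qed
      show ?thesis unfolding lambda_min_def by (rule cInf_eq_minimum[OF mem low])
    qed
    have "\<mu> * c \<le> trace (A ** Q ** transpose A)"
      unfolding c_def normWinv2_def Wi_def[symmetric] by (rule trace_quad_mono) (rule bnd)
    thus ?thesis using LHS Lb lm gA unfolding c_def A_def Gx_def Gs_def EP_def Pj_def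
      by (simp add: algebra_simps)
  qed
qed

end
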